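(* Let $B$ be any group and $p\ge 2$ an integer, and let $\sigma=(1,2,\dots,p)$. Let $r_1,\dots,r_{p-1},f,g\in B$ and let $$w=(r_1,r_2,\dots,r_{p-1},\ r_1^{-1}\cdots r_{p-1}^{-1}[f,g])\in B\wr C_p.$$ Define elements of $B$ by $a_{1,i}=e$ for $1\le i\le p-1$, $a_{2,1}=(f^{-1})^{r_1^{-1}\cdots r_{p-1}^{-1}}$, $a_{2,i}=r_{i-1}a_{2,i-1}$ for $2\le i\le p$, and $a_{1,p}=g^{a_{2,p}^{-1}}$. Then $$w=\big[(a_{1,1},\dots,a_{1,p})\sigma,\ (a_{2,1},\dots,a_{2,p})\big].$$
   Context: $B\wr C_p=B^p\rtimes C_p$ with $C_p=\langle\sigma\rangle$ acting on $\{1,\dots,p\}$; elements are written $(g_1,\dots,g_p)\pi$ with multiplication $(g_1,\dots,g_p)\pi\cdot(h_1,\dots,h_p)\tau=(g_1h_{\pi(1)},\dots,g_ph_{\pi(p)})\pi\tau$. Conventions: $[a,b]=aba^{-1}b^{-1}$ and $a^b=bab^{-1}$. *)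

theory Defs
  imports "HOL-Algebra.Group"
begin

definition gcomm :: "('a, 'b) monoid_scheme \<Rightarrow> 'a \<Rightarrow> 'a \<Rightarrow> 'a" where
  "gcomm G a b = a \<otimes>\<^bsub>G\<^esub> b \<otimes>\<^bsub>G\<^esub> inv\<^bsub>G\<^esub> a \<otimes>\<^bsub>G\<^esub> inv\<^bsub>G\<^esub> b"

definition gconj :: "('a, 'b) monoid_scheme \<Rightarrow> 'a \<Rightarrow> 'a \<Rightarrow> 'a" where
  "gconj G a b = b \<otimes>\<^bsub>G\<^esub> a \<otimes>\<^bsub>G\<^esub> inv\<^bsub>G\<^esub> b"

definition cyc :: "nat \<Rightarrow> nat \<Rightarrow> nat" where
  "cyc p i = (if 1 \<le> i \<and> i < p then i + 1 else if i = p then 1 else i)"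

text \<open>Elements of the wreath product B wr C_p are pairs (g, pi): g : nat => B is the
  base tuple (g_1,...,g_p), normalized to the identity outside {1..p}, and pi is a
  permutation of nat fixing everything outside {1..p}.\<close>
definition wr_mult :: "('a, 'b) monoid_scheme \<Rightarrow> nat \<Rightarrow> (nat \<Rightarrow> 'a) \<times> (nat \<Rightarrow> nat)
    \<Rightarrow> (nat \<Rightarrow> 'a) \<times> (nat \<Rightarrow> nat) \<Rightarrow> (nat \<Rightarrow> 'a) \<times> (nat \<Rightarrow> nat)" where
  "wr_mult G p x y =
     ((\<lambda>i. if i \<in> {1..p} then fst x i \<otimes>\<^bsub>G\<^esub> fst y (snd x i) else \<one>\<^bsub>G\<^esub>), snd x \<circ> snd y)"

definition wr_inv :: "('a, 'b) monoid_scheme \<Rightarrow> nat \<Rightarrow> (nat \<Rightarrow> 'a) \<times> (nat \<Rightarrow> nat)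
    \<Rightarrow> (nat \<Rightarrow> 'a) \<times> (nat \<Rightarrow> nat)" where
  "wr_inv G p x =
     ((\<lambda>i. if i \<in> {1..p} then inv\<^bsub>G\<^esub> (fst x (inv_into UNIV (snd x) i)) else \<one>\<^bsub>G\<^esub>), inv_into UNIV (snd x))"

definition wr_comm :: "('a, 'b) monoid_scheme \<Rightarrow> nat \<Rightarrow> (nat \<Rightarrow> 'a) \<times> (nat \<Rightarrow> nat)
    \<Rightarrow> (nat \<Rightarrow> 'a) \<times> (nat \<Rightarrow> nat) \<Rightarrow> (nat \<Rightarrow> 'a) \<times> (nat \<Rightarrow> nat)" where
  "wr_comm G p x y = wr_mult G p (wr_mult G p x y) (wr_mult G p (wr_inv G p x) (wr_inv G p y))"

end

theory Submission
  imports Defs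
begin

definition cinv :: "nat \<Rightarrow> nat \<Rightarrow> nat" where
  "cinv p i = (if 2 \<le> i \<and> i \<le> p then i - 1 else if i = 1 \<and> 1 \<le> p then p else i)"

lemma cyc_inj: "1 \<le> p \<Longrightarrow> inj (cyc p)"
  unfolding inj_def cyc_def by auto

lemma cyc_inv: "1 \<le> p \<Longrightarrow> inv_into UNIV (cyc p) i = cinv p i"
  apply (rule inv_into_f_eq[OF cyc_inj], assumption)
  apply simp
  unfolding cyc_def cinv_def by auto

lemma foldr_gen:
  assumes "group G" "\<forall>i\<in>set xs. r i \<in> carrier G" "z \<in> carrier G"
  shows "foldr (\<lambda>i acc. inv\<^bsub>G\<^esub> (r i) \<otimes>\<^bsub>G\<^esub> acc) xs z
     = foldr (\<lambda>i acc. inv\<^bsub>G\<^esub> (r i) \<otimes>\<^bsub>G\<^esub> acc) xs \<one>\<^bsub>G\<^esub> \<otimes>\<^bsub>G\<^esub> z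
   \<and> foldr (\<lambda>i acc. inv\<^bsub>G\<^esub> (r i) \<otimes>\<^bsub>G\<^esub> acc) xs \<one>\<^bsub>G\<^esub> \<in> carrier G"
  using assms(2)
proof (induction xs)
  case Nil
  then show ?case using assms by (simp add: group.is_monoid monoid.l_one)
next
  case (Cons a xs)
  interpret group G by fact
  from Cons show ?case using assms(3) by (simp add: m_assoc)
qed

lemma (in group) cancel1: "x \<in> carrier G \<Longrightarrow> y \<in> carrier G \<Longrightarrow> x \<otimes> (inv x \<otimes> y) = y"
  by (simp add: m_assoc[symmetric])

lemma (in group) cancel2: "x \<in> carrier G \<Longrightarrow> y \<in> carrier G \<Longrightarrow> inv x \<otimes> (x \<otimes> y) = y"
  by (simp add: m_assoc[symmetric])

lemma (in group) main:
  fixes p :: nat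
    and r :: "nat \<Rightarrow> 'a" and f g :: 'a and a2 :: "nat \<Rightarrow> 'a"
  assumes "p \<ge> 2"
    and "\<forall>i\<in>{1..p-1}. r i \<in> carrier G" and "f \<in> carrier G" and "g \<in> carrier G"
    and "a2 1 = gconj G (inv f) (foldr (\<lambda>i acc. inv (r i) \<otimes> acc) [1..<p] \<one>)"
    and "\<forall>i\<in>{2..p}. a2 i = r (i - 1) \<otimes> a2 (i - 1)"
  shows "((\<lambda>i. if 1 \<le> i \<and> i < p then r i
               else if i = p then foldr (\<lambda>i acc. inv (r i) \<otimes> acc) [1..<p] \<one>
                                  \<otimes> gcomm G f g
               else \<one>), id)
       = wr_comm G p
           ((\<lambda>i. if i = p then gconj G g (inv (a2 p)) else \<one>), cyc p)
           ((\<lambda>i. if i \<in> {1..p} then a2 i else \<one>), id)"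
proof -
  define h where "h = (\<lambda>i acc. inv\<^bsub>G\<^esub> (r i) \<otimes>\<^bsub>G\<^esub> acc)"
  define F where "F k = foldr h [1..<k] \<one>" for k
  have Fgen: "foldr h [1..<k] z = F k \<otimes> z \<and> F k \<in> carrier G" if "k \<le> p" "z \<in> carrier G" for k z
  proof -
    have "\<forall>i\<in>set [1..<k]. r i \<in> carrier G" using that assms(2) by auto
    then show ?thesis unfolding h_def F_def using foldr_gen[OF is_group, of "[1..<k]" r z] that by blast
  qed
  have R: "F p \<in> carrier G" using Fgen[of p \<one>] by simp
  have b1: "a2 1 \<in> carrier G" using assms(5) R assms(3) unfolding gconj_def F_def h_def by simp
  have bk: "a2 k = inv (F k) \<otimes> a2 1 \<and> a2 k \<in> carrier G" if "1 \<le> k" "k \<le> p" for k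
    using that
  proof (induction k)
    case 0 then show ?case by simp
  next
    case (Suc k)
    show ?case
    proof (cases "k = 0")
      case True then show ?thesis using b1 by (simp add: F_def)
    next
      case False
      have ih: "a2 k = inv (F k) \<otimes> a2 1" "a2 k \<in> carrier G" using Suc False by auto
      have rk: "r k \<in> carrier G" using assms(2) Suc False by auto
      have Fk: "F k \<in> carrier G" using Fgen[of k \<one>] Suc by simp
      have "F (Suc k) = F k \<otimes> inv (r k)"
        using Fgen[of k "inv (r k) \<otimes> \<one>"] Suc False rk unfolding F_def
        by (simp add: h_def)
      hence "inv (F (Suc k)) = r k \<otimes> inv (F k)" using Fk rk by (simp add: inv_mult_group)
      moreover have "a2 (Suc k) = r k \<otimes> a2 k" using assms(6) Suc False by auto
      ultimately show ?thesis using ih rk Fk b1 by (simp add: m_assoc)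
    qed
  qed
  have p1: "1 \<le> p" using assms(1) by simp
  have ap: "a2 p = inv f \<otimes> inv (F p)"
  proof -
    have a1: "a2 1 = F p \<otimes> inv f \<otimes> inv (F p)" using assms(5) unfolding gconj_def F_def h_def by simp
    have "a2 p = inv (F p) \<otimes> (F p \<otimes> inv f \<otimes> inv (F p))" using bk[of p] p1 a1 by simp
    also have "\<dots> = inv f \<otimes> inv (F p)" using R assms(3) by (simp add: m_assoc[symmetric] l_inv)
    finally show ?thesis .
  qed
  have snd_eq: "cyc p \<circ> cinv p = id" using p1 unfolding cyc_def cinv_def by (intro ext) auto
  show ?thesis
    unfolding wr_comm_def wr_mult_def wr_inv_def cyc_inv[OF p1] inv_id
    apply (rule prod_eqI)
     apply (rule ext)
    subgoal for i
      apply (cases "1 \<le> i \<and> i < p"; cases "i = p")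
         apply (simp_all add: cyc_inv[OF p1] cyc_def cinv_def)
      subgoal
      proof -
        assume i: "Suc 0 \<le> i \<and> i < p"
        have "a2 (Suc i) = r i \<otimes> a2 i" using assms(6) i by auto
        moreover have "r i \<in> carrier G" using assms(2) i by auto
        moreover have "a2 i \<in> carrier G" using i by (intro conjunct2[OF bk]) auto
        ultimately show ?thesis by (simp add: m_assoc)
      qed
      subgoal
      proof -
        have Rd: "foldr (\<lambda>i. (\<otimes>) (inv r i)) [Suc 0..<p] \<one> = F p" by (simp add: F_def h_def)
        have a1: "a2 (Suc 0) = F p \<otimes> inv f \<otimes> inv (F p)" using assms(5) unfolding gconj_def F_def h_def by simp
        show ?thesis using p1 unfolding Rd a1 ap gconj_def gcomm_def
          using R assms(3,4) by (simp add: m_assoc inv_mult_group cancel1 cancel2)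
      qed
      using p1 by (cases "i = 0"; cases "i = Suc 0") simp_all
    using snd_eq by (simp add: fun_eq_iff cyc_inv[OF p1])
qed

theorem lemma3:
  fixes G :: "('a, 'b) monoid_scheme" and p :: nat
    and r :: "nat \<Rightarrow> 'a" and f g :: 'a and a2 :: "nat \<Rightarrow> 'a"
  assumes "group G" and "p \<ge> 2"
    and "\<forall>i\<in>{1..p-1}. r i \<in> carrier G" and "f \<in> carrier G" and "g \<in> carrier G"
    and "a2 1 = gconj G (inv\<^bsub>G\<^esub> f) (foldr (\<lambda>i acc. inv\<^bsub>G\<^esub> (r i) \<otimes>\<^bsub>G\<^esub> acc) [1..<p] \<one>\<^bsub>G\<^esub>)"
    and "\<forall>i\<in>{2..p}. a2 i = r (i - 1) \<otimes>\<^bsub>G\<^esub> a2 (i - 1)"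
  shows "((\<lambda>i. if 1 \<le> i \<and> i < p then r i
               else if i = p then foldr (\<lambda>i acc. inv\<^bsub>G\<^esub> (r i) \<otimes>\<^bsub>G\<^esub> acc) [1..<p] \<one>\<^bsub>G\<^esub>
                                  \<otimes>\<^bsub>G\<^esub> gcomm G f g
               else \<one>\<^bsub>G\<^esub>), id)
       = wr_comm G p
           ((\<lambda>i. if i = p then gconj G g (inv\<^bsub>G\<^esub> (a2 p)) else \<one>\<^bsub>G\<^esub>), cyc p)
           ((\<lambda>i. if i \<in> {1..p} then a2 i else \<one>\<^bsub>G\<^esub>), id)"
  by (rule group.main[OF assms(1) assms(2-7)])

end
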